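(* A ring $R$ is strongly nil-clean if and only if $R$ is a CSNC ring and $R$ is semi-potent.
   Context: All rings are associative with identity $1$. For a ring $R$, $\mathrm{Id}(R)$, $U(R)$, $\mathrm{Nil}(R)$ denote the sets of idempotents, units and nilpotent elements, and $J(R)$ the Jacobson radical. An element $a\in R$ is clean if $a=e+u$ for some $e\in\mathrm{Id}(R)$, $u\in U(R)$. An element $a$ is strongly nil-clean if $a=e+q$ with $e\in \mathrm{Id}(R)$, $q\in\mathrm{Nil}(R)$ and $eq=qe$; the ring $R$ is strongly nil-clean if every element is strongly nil-clean. A ring $R$ is called CSNC if every clean element of $R$ is strongly nil-clean. A ring $R$ is semi-potent if every one-sided ideal of $R$ not contained in $J(R)$ contains a nonzero idempotent. *)

theory Defs
  imports Main
begin

text \<open>Rings: associative with identity, not necessarily commutative; the zero ring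
is allowed (type class ring + monoid_mult, no 0 \<noteq> 1 requirement).\<close>

definition idempotents :: "('a::{ring,monoid_mult}) set" where
  "idempotents = {e. e * e = e}"

definition units_of_ring :: "('a::{ring,monoid_mult}) set" where
  "units_of_ring = {u. \<exists>v. u * v = 1 \<and> v * u = 1}"

definition nilpotents :: "('a::{ring,monoid_mult}) set" where
  "nilpotents = {q. \<exists>n::nat. q ^ n = 0}"

definition left_ideal :: "('a::{ring,monoid_mult}) set \<Rightarrow> bool" where
  "left_ideal I \<longleftrightarrow> 0 \<in> I \<and> (\<forall>x\<in>I. \<forall>y\<in>I. x + y \<in> I) \<and> (\<forall>x\<in>I. - x \<in> I)
     \<and> (\<forall>r. \<forall>x\<in>I. r * x \<in> I)"

definition right_ideal :: "('a::{ring,monoid_mult}) set \<Rightarrow> bool" where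
  "right_ideal I \<longleftrightarrow> 0 \<in> I \<and> (\<forall>x\<in>I. \<forall>y\<in>I. x + y \<in> I) \<and> (\<forall>x\<in>I. - x \<in> I)
     \<and> (\<forall>r. \<forall>x\<in>I. x * r \<in> I)"

definition maximal_left_ideal :: "('a::{ring,monoid_mult}) set \<Rightarrow> bool" where
  "maximal_left_ideal M \<longleftrightarrow> left_ideal M \<and> M \<noteq> UNIV \<and>
     (\<forall>I. left_ideal I \<and> M \<subseteq> I \<longrightarrow> I = M \<or> I = UNIV)"

definition jacobson :: "('a::{ring,monoid_mult}) set" where
  "jacobson = \<Inter> {M. maximal_left_ideal M}"

definition clean :: "'a::{ring,monoid_mult} \<Rightarrow> bool" where
  "clean a \<longleftrightarrow> (\<exists>e u. e \<in> idempotents \<and> u \<in> units_of_ring \<and> a = e + u)"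

definition strongly_nil_clean_elem :: "'a::{ring,monoid_mult} \<Rightarrow> bool" where
  "strongly_nil_clean_elem a \<longleftrightarrow>
     (\<exists>e q. e \<in> idempotents \<and> q \<in> nilpotents \<and> e * q = q * e \<and> a = e + q)"

definition strongly_nil_clean_ring :: "'a::{ring,monoid_mult} itself \<Rightarrow> bool" where
  "strongly_nil_clean_ring _ \<longleftrightarrow> (\<forall>a::'a. strongly_nil_clean_elem a)"

definition CSNC_ring :: "'a::{ring,monoid_mult} itself \<Rightarrow> bool" where
  "CSNC_ring _ \<longleftrightarrow> (\<forall>a::'a. clean a \<longrightarrow> strongly_nil_clean_elem a)"

definition semi_potent :: "'a::{ring,monoid_mult} itself \<Rightarrow> bool" where
  "semi_potent _ \<longleftrightarrow> (\<forall>I::'a set. (left_ideal I \<or> right_ideal I) \<and> \<not> I \<subseteq> jacobson \<longrightarrow>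
       (\<exists>e\<in>I. e \<in> idempotents \<and> e \<noteq> 0))"

end

theory Submission
  imports Defs
begin

lemma one_zero_triv: "(1::'a::{ring,monoid_mult}) = 0 \<Longrightarrow> (x::'a) = 0"
  by (metis mult_1_right mult_zero_right)

lemma pow_comm:
  fixes x y :: "'a::{ring,monoid_mult}"
  assumes "x*y = y*x" shows "x^n * y = y * x^n"
proof (induction n)
  case 0 then show ?case by simp
next
  case (Suc n)
  have "x^Suc n * y = x * (x^n * y)" by (simp add: mult.assoc)
  also have "\<dots> = x * y * x^n" using Suc by (simp add: mult.assoc)
  also have "\<dots> = y * x^Suc n" using assms by (simp add: mult.assoc)
  finally show ?case .
qed

lemma mult_pow:
  fixes x y :: "'a::{ring,monoid_mult}"
  assumes "x*y = y*x" shows "(x*y)^n = x^n * y^n"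
proof (induction n)
  case 0 then show ?case by simp
next
  case (Suc n)
  have "(x*y)^Suc n = x * (y * x^n) * y^n" using Suc by (simp add: mult.assoc)
  also have "\<dots> = x * (x^n * y) * y^n" using pow_comm[OF assms] by simp
  also have "\<dots> = x^Suc n * y^Suc n" by (simp add: mult.assoc)
  finally show ?case .
qed

lemma geom_right:
  fixes z :: "'a::{ring,monoid_mult}"
  shows "(1 - z) * (\<Sum>k<n. z^k) = 1 - z^n"
proof (induction n)
  case 0 then show ?case by simp
next
  case (Suc n)
  have "(1 - z) * (\<Sum>k<Suc n. z^k) = (1 - z) * (\<Sum>k<n. z^k) + (1-z)*z^n"
    by (simp add: distrib_left)
  also have "\<dots> = 1 - z^n + (z^n - z^Suc n)" using Suc by (simp add: algebra_simps)
  finally show ?case by simp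
qed

lemma geom_left:
  fixes z :: "'a::{ring,monoid_mult}"
  shows "(\<Sum>k<n. z^k) * (1 - z) = 1 - z^n"
proof (induction n)
  case 0 then show ?case by simp
next
  case (Suc n)
  have "(\<Sum>k<Suc n. z^k) * (1 - z) = (\<Sum>k<n. z^k) * (1 - z) + z^n*(1-z)"
    by (simp add: distrib_right)
  also have "\<dots> = 1 - z^n + (z^n - z^Suc n)" using Suc
    by (simp add: algebra_simps power_Suc2 power_commutes)
  finally show ?case by simp
qed

lemma sum_pow_comm:
  fixes z c :: "'a::{ring,monoid_mult}"
  assumes "c*z = z*c" shows "c * (\<Sum>k<n. z^k) = (\<Sum>k<n. z^k) * c"
  by (simp add: sum_distrib_left sum_distrib_right pow_comm[OF assms[symmetric]])

lemma nil_unit: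
  fixes z :: "'a::{ring,monoid_mult}"
  assumes "z^n = 0"
  shows "\<exists>v. (1 - z)*v = 1 \<and> v*(1-z) = 1 \<and> (\<forall>c. c*z = z*c \<longrightarrow> c*v = v*c)"
  using geom_right[of z n] geom_left[of z n] sum_pow_comm[of _ z n] assms by auto

lemma neg_pow_cases:
  fixes q :: "'a::{ring,monoid_mult}"
  shows "(-q)^n = q^n \<or> (-q)^n = - (q^n)"
  by (induction n) auto

lemma neg_nil: fixes q :: "'a::{ring,monoid_mult}" shows "q^n = 0 \<Longrightarrow> (-q)^n = 0"
  using neg_pow_cases[of q n] by auto

lemma inv_comm:
  fixes x p v :: "'a::{ring,monoid_mult}"
  assumes "p*v = 1" "v*p = 1" "x*p = p*x" shows "x*v = v*x"
proof -
  have "x*v = (v*p)*(x*v)" by (simp add: assms(2))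
  also have "\<dots> = v*(p*x)*v" by (simp add: mult.assoc)
  also have "\<dots> = v*x*(p*v)" by (metis assms(3) mult.assoc)
  also have "\<dots> = v*x" using assms(1) by simp
  finally show ?thesis .
qed

lemma units_iff: "u \<in> units_of_ring \<longleftrightarrow> (\<exists>v. u*v = 1 \<and> v*u = 1)"
  by (simp add: units_of_ring_def)


lemma jac_mem: "x \<in> jacobson \<longleftrightarrow> (\<forall>M. maximal_left_ideal M \<longrightarrow> x \<in> M)"
  by (auto simp: jacobson_def)

lemma jac_left_ideal: "left_ideal (jacobson::'a::{ring,monoid_mult} set)"
proof -
  have H: "\<And>M. maximal_left_ideal M \<Longrightarrow> 0 \<in> M \<and> (\<forall>x\<in>M. \<forall>y\<in>M. x + y \<in> M) \<and> (\<forall>x\<in>M. - x \<in> M) \<and> (\<forall>r. \<forall>x\<in>M. r * x \<in> M)"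
    by (simp add: maximal_left_ideal_def left_ideal_def)
  have a: "(0::'a) \<in> jacobson" unfolding jac_mem using H by blast
  have b: "x + y \<in> jacobson" if "x \<in> jacobson" "y \<in> jacobson" for x y :: 'a
    using that unfolding jac_mem using H by blast
  have c: "- x \<in> jacobson" if "x \<in> jacobson" for x :: 'a
    using that unfolding jac_mem using H by blast
  have d: "r * x \<in> jacobson" if "x \<in> jacobson" for x r :: 'a
    using that unfolding jac_mem using H by blast
  show ?thesis unfolding left_ideal_def using a b c d by blast
qed

lemma J_easy:
  fixes x :: "'a::{ring,monoid_mult}"
  assumes H: "\<forall>r. 1 - r*x \<in> units_of_ring" shows "x \<in> jacobson"
proof (rule ccontr)
  assume "x \<notin> jacobson"
  then obtain M where M: "maximal_left_ideal M" "x \<notin> M" by (auto simp: jac_mem)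
  have LM: "left_ideal M" "M \<noteq> UNIV" using M(1) by (auto simp: maximal_left_ideal_def)
  define I where "I = {m + r*x | m r. m \<in> M}"
  have memI: "\<And>m r. m \<in> M \<Longrightarrow> m + r*x \<in> I" unfolding I_def by blast
  have Mc: "0 \<in> M" "\<And>a b. a \<in> M \<Longrightarrow> b \<in> M \<Longrightarrow> a + b \<in> M"
     "\<And>a. a \<in> M \<Longrightarrow> -a \<in> M" "\<And>s a. a \<in> M \<Longrightarrow> s*a \<in> M"
    using LM(1) by (auto simp: left_ideal_def)
  have "left_ideal I"
    unfolding left_ideal_def
  proof (intro conjI ballI allI)
    show "0 \<in> I" using memI[OF Mc(1), of 0] by simp
  next
    fix a b assume "a \<in> I" "b \<in> I"
    then obtain m1 r1 m2 r2 where "a = m1 + r1*x" "b = m2 + r2*x" "m1 \<in> M" "m2 \<in> M" unfolding I_def by auto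
    moreover have "m1 + r1*x + (m2 + r2*x) = (m1+m2) + (r1+r2)*x" by (simp add: algebra_simps)
    ultimately show "a + b \<in> I" using memI Mc(2) by metis
  next
    fix a assume "a \<in> I"
    then obtain m1 r1 where "a = m1 + r1*x" "m1 \<in> M" unfolding I_def by auto
    moreover have "- (m1 + r1*x) = (-m1) + (-r1)*x" by (simp add: algebra_simps)
    ultimately show "- a \<in> I" using memI Mc(3) by metis
  next
    fix s a assume "a \<in> I"
    then obtain m1 r1 where "a = m1 + r1*x" "m1 \<in> M" unfolding I_def by auto
    moreover have "s*(m1 + r1*x) = (s*m1) + (s*r1)*x" by (simp add: algebra_simps)
    ultimately show "s * a \<in> I" using memI Mc(4) by metis
  qed
  moreover have "M \<subseteq> I" using memI by (metis add_0_right mult_zero_left subsetI)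
  moreover have "x \<in> I" using memI[OF Mc(1), of 1] by simp
  ultimately have "I = UNIV" using M by (auto simp: maximal_left_ideal_def)
  then have "1 \<in> I" by simp
  then obtain m r where mr: "1 = m + r*x" "m \<in> M" unfolding I_def by auto
  then have "m = 1 - r*x" by (simp add: algebra_simps)
  with H obtain v where "v*m = 1" by (auto simp: units_iff)
  then have "1 \<in> M" using mr(2) LM(1) by (metis left_ideal_def)
  then have "\<forall>y. y \<in> M" using LM(1) by (metis left_ideal_def mult_1_right)
  then show False using LM(2) by auto
qed

lemma J_hard:
  fixes x :: "'a::{ring,monoid_mult}"
  assumes x: "x \<in> jacobson" shows "\<exists>w. w*(1 - r*x) = 1"
proof (rule ccontr)
  assume nw: "\<not> (\<exists>w. w*(1 - r*x) = 1)"
  define L where "L = {s*(1 - r*x) | s. True}"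
  define A where "A = {I. left_ideal I \<and> L \<subseteq> I \<and> (1::'a) \<notin> I}"
  have "L \<in> A"
    unfolding A_def
  proof (intro CollectI conjI)
    show "left_ideal L" unfolding left_ideal_def L_def
    proof (intro conjI ballI allI)
      show "0 \<in> {s * (1 - r * x) |s. True}" by (auto intro!: exI[of _ 0])
      fix a b assume "a \<in> {s * (1 - r * x) |s. True}" "b \<in> {s * (1 - r * x) |s. True}"
      then obtain s1 s2 where "a = s1 * (1 - r * x)" "b = s2 * (1 - r * x)" by auto
      then show "a + b \<in> {s * (1 - r * x) |s. True}" by (auto simp only: distrib_right[symmetric])
    next
      fix a assume "a \<in> {s * (1 - r * x) |s. True}"
      then obtain s1 where "a = s1 * (1 - r * x)" by auto
      then have "- a = (-s1) * (1 - r * x)" by simp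
      then show "- a \<in> {s * (1 - r * x) |s. True}" by blast
    next
      fix t a assume "a \<in> {s * (1 - r * x) |s. True}"
      then obtain s1 where "a = s1 * (1 - r * x)" by auto
      then show "t * a \<in> {s * (1 - r * x) |s. True}" by (auto simp only: mult.assoc[symmetric])
    qed
    show "L \<subseteq> L" by simp
    show "1 \<notin> L" using nw unfolding L_def by auto
  qed
  then have "A \<noteq> {}" by auto
  moreover have "\<Union>C \<in> A" if "C \<noteq> {}" "subset.chain A C" for C
  proof -
    have CA: "C \<subseteq> A" and ch: "\<forall>X\<in>C. \<forall>Y\<in>C. X \<subseteq> Y \<or> Y \<subseteq> X"
      using that(2) by (auto simp: subset_chain_def)
    have li: "\<And>X. X \<in> C \<Longrightarrow> left_ideal X" using CA by (auto simp: A_def)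
    have "left_ideal (\<Union>C)"
      unfolding left_ideal_def
    proof (intro conjI ballI allI)
      show "0 \<in> \<Union>C" using that(1) li by (auto simp: left_ideal_def)
      fix a b assume "a \<in> \<Union>C" "b \<in> \<Union>C"
      then obtain X Y where XY: "X \<in> C" "Y \<in> C" "a \<in> X" "b \<in> Y" by auto
      show "a + b \<in> \<Union>C"
      proof (cases "X \<subseteq> Y")
        case True then show ?thesis using XY li[of Y] by (auto simp: left_ideal_def)
      next
        case False then have "Y \<subseteq> X" using ch XY by auto
        then show ?thesis using XY li[of X] by (auto simp: left_ideal_def)
      qed
    next
      fix a assume "a \<in> \<Union>C" then show "- a \<in> \<Union>C" using li by (auto simp: left_ideal_def)
    next
      fix s a assume "a \<in> \<Union>C"
      then obtain X where "X \<in> C" "a \<in> X" by auto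
      then have "s * a \<in> X" using li[of X] by (auto simp: left_ideal_def)
      then show "s * a \<in> \<Union>C" using \<open>X \<in> C\<close> by auto
    qed
    moreover have "L \<subseteq> \<Union>C" using that(1) CA by (auto simp: A_def)
    moreover have "1 \<notin> \<Union>C" using CA by (auto simp: A_def)
    ultimately show ?thesis by (simp add: A_def)
  qed
  ultimately obtain M where M: "M \<in> A" "\<forall>X\<in>A. M \<subseteq> X \<longrightarrow> X = M"
    using subset_Zorn_nonempty[of A] by blast
  have lM: "left_ideal M" "L \<subseteq> M" "1 \<notin> M" using M(1) by (auto simp: A_def)
  have "maximal_left_ideal M"
    unfolding maximal_left_ideal_def
  proof (intro conjI allI impI)
    show "left_ideal M" by fact
    show "M \<noteq> UNIV" using lM by auto
    fix I assume I: "left_ideal I \<and> M \<subseteq> I"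
    show "I = M \<or> I = UNIV"
    proof (cases "1 \<in> I")
      case True
      then have "\<forall>y. y \<in> I" using I by (metis left_ideal_def mult_1_right)
      then show ?thesis by auto
    next
      case False
      then have "I \<in> A" using I lM by (auto simp: A_def)
      then show ?thesis using M I by auto
    qed
  qed
  then have "x \<in> M" using x by (auto simp: jac_mem)
  then have "r*x \<in> M" using lM(1) by (auto simp: left_ideal_def)
  moreover have "1 - r*x \<in> M" using lM(2) unfolding L_def by (force intro: exI[of _ 1])
  ultimately have "(1 - r*x) + r*x \<in> M" using lM(1) unfolding left_ideal_def by blast
  then show False using lM(3) by simp
qed

lemma J_unit:
  fixes x :: "'a::{ring,monoid_mult}"
  assumes x: "x \<in> jacobson" shows "1 - r*x \<in> units_of_ring"
proof -
  obtain w where w: "w*(1 - r*x) = 1" using J_hard[OF x] by blast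
  then have "w = 1 - (-(w*r))*x" by (simp add: algebra_simps mult.assoc)
  then obtain v where v: "v*w = 1" using J_hard[OF x, of "-(w*r)"] by metis
  have "v = v*(w*(1 - r*x))" using w by simp
  also have "\<dots> = 1 - r*x" using v by (simp add: mult.assoc[symmetric])
  finally have "(1 - r*x)*w = 1" using v by simp
  then show ?thesis using w by (auto simp: units_iff)
qed

lemma swap_unit:
  fixes x r :: "'a::{ring,monoid_mult}"
  assumes "1 - x*r \<in> units_of_ring" shows "1 - r*x \<in> units_of_ring"
proof -
  obtain u where u: "(1 - x*r)*u = 1" "u*(1 - x*r) = 1" using assms by (auto simp: units_iff)
  have h1: "u - x*r*u = 1" using u(1) by (simp add: algebra_simps)
  have h2: "u - u*x*r = 1" using u(2) by (simp add: algebra_simps)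
  have "(1 - r*x)*(1 + r*u*x) = 1 - r*x + r*(u - x*r*u)*x" by (simp add: algebra_simps)
  also have "\<dots> = 1" using h1 by simp
  finally have a: "(1 - r*x)*(1 + r*u*x) = 1" .
  have "(1 + r*u*x)*(1 - r*x) = 1 - r*x + r*(u - u*x*r)*x" by (simp add: algebra_simps)
  also have "\<dots> = 1" using h2 by simp
  finally have b: "(1 + r*u*x)*(1 - r*x) = 1" .
  show ?thesis using a b by (auto simp: units_iff)
qed

lemma J_char: "(x::'a::{ring,monoid_mult}) \<in> jacobson \<longleftrightarrow> (\<forall>r. 1 - r*x \<in> units_of_ring)"
  using J_easy J_unit by blast

lemma J_rmult: "(x::'a::{ring,monoid_mult}) \<in> jacobson \<Longrightarrow> x*s \<in> jacobson"
  unfolding J_char using swap_unit[of s "_*x"] by (metis mult.assoc)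

lemma J_lmult: "(x::'a::{ring,monoid_mult}) \<in> jacobson \<Longrightarrow> s*x \<in> jacobson"
  using jac_left_ideal by (auto simp: left_ideal_def)

lemma J_add: "(x::'a::{ring,monoid_mult}) \<in> jacobson \<Longrightarrow> y \<in> jacobson \<Longrightarrow> x + y \<in> jacobson"
  using jac_left_ideal by (auto simp: left_ideal_def)

lemma J_neg: "(x::'a::{ring,monoid_mult}) \<in> jacobson \<Longrightarrow> - x \<in> jacobson"
  using jac_left_ideal by (auto simp: left_ideal_def)

lemma J_diff: "(x::'a::{ring,monoid_mult}) \<in> jacobson \<Longrightarrow> y \<in> jacobson \<Longrightarrow> x - y \<in> jacobson"
  using J_add J_neg by (metis diff_conv_add_uminus)

lemma J_zero: "(0::'a::{ring,monoid_mult}) \<in> jacobson"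
  using jac_left_ideal by (auto simp: left_ideal_def)

lemma idem_J: fixes e :: "'a::{ring,monoid_mult}"
  assumes "e*e = e" "e \<in> jacobson" shows "e = 0"
proof -
  obtain v where v: "(1 - 1*e)*v = 1" using J_unit[OF assms(2), of 1] by (auto simp: units_iff)
  have "e = e*((1 - e)*v)" using v by simp
  also have "\<dots> = (e - e*e)*v" by (simp add: algebra_simps mult.assoc)
  finally show ?thesis using assms(1) by simp
qed


definition Cm :: "'a::{ring,monoid_mult} \<Rightarrow> 'a set" where
  "Cm a = {x. \<forall>y. y*a = a*y \<longrightarrow> y*x = x*y}"

lemma Cm_a: "a \<in> Cm a" by (auto simp: Cm_def)
lemma Cm_1: "1 \<in> Cm a" by (auto simp: Cm_def)
lemma Cm_0: "0 \<in> Cm a" by (auto simp: Cm_def)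
lemma Cm_add: "x \<in> Cm a \<Longrightarrow> y \<in> Cm a \<Longrightarrow> x + y \<in> Cm a" by (auto simp: Cm_def algebra_simps)
lemma Cm_diff: "x \<in> Cm a \<Longrightarrow> y \<in> Cm a \<Longrightarrow> x - y \<in> Cm a" by (auto simp: Cm_def algebra_simps)
lemma Cm_mult: "x \<in> Cm a \<Longrightarrow> y \<in> Cm a \<Longrightarrow> x * y \<in> Cm a"
proof -
  assume x: "x \<in> Cm a" and y: "y \<in> Cm a"
  show ?thesis unfolding Cm_def
  proof (intro CollectI allI impI)
    fix z assume z: "z*a = a*z"
    have "z*x = x*z" "z*y = y*z" using x y z by (auto simp: Cm_def)
    then have "z*(x*y) = x*(y*z)" by (metis mult.assoc)
    then show "z*(x*y) = x*y*z" by (simp add: mult.assoc)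
  qed
qed
lemma Cm_comm: "x \<in> Cm a \<Longrightarrow> y \<in> Cm a \<Longrightarrow> x * y = y * x"
proof -
  assume x: "x \<in> Cm a" and y: "y \<in> Cm a"
  have "y*a = a*y" using y by (auto simp: Cm_def)
  then show ?thesis using x by (auto simp: Cm_def)
qed

lemmas Cm_intros = Cm_a Cm_1 Cm_0 Cm_add Cm_diff Cm_mult

lemma lift_step:
  fixes a :: "'a::{ring,monoid_mult}"
  defines "n \<equiv> a*a - a"
  shows "b \<in> Cm a \<Longrightarrow> g \<in> Cm a \<Longrightarrow> b - a = n*g \<Longrightarrow> (b*b - b)^m = 0 \<Longrightarrow>
    \<exists>e\<in>Cm a. e*e = e \<and> (\<exists>g\<in>Cm a. e - a = n*g)"
proof (induction m arbitrary: b g rule: less_induct)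
  case (less m)
  show ?case
  proof (cases "m \<le> 1")
    case True
    have "b*b = b"
    proof (cases "m = 0")
      case True
      then have "(1::'a) = 0" using less.prems by simp
      then show ?thesis using one_zero_triv by metis
    next
      case False then have "m = 1" using \<open>m \<le> 1\<close> by simp
      then show ?thesis using less.prems by simp
    qed
    then show ?thesis using less.prems by blast
  next
    case False
    have nC: "n \<in> Cm a" unfolding n_def by (intro Cm_intros)
    define d where "d = b*b - b"
    define b' where "b' = b*b + b*b + b*b - b*b*b - b*b*b"
    define s where "s = d+d+d+d - 1 - 1 - 1"
    define t where "t = 1 - b - b"
    have dC: "d \<in> Cm a" unfolding d_def using less.prems by (intro Cm_intros)
    have b'C: "b' \<in> Cm a" unfolding b'_def using less.prems by (intro Cm_intros)
    have sC: "s \<in> Cm a" unfolding s_def using dC by (intro Cm_intros)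
    have tC: "t \<in> Cm a" unfolding t_def using less.prems by (intro Cm_intros)
    have I1: "b'*b' - b' = d*d*s" unfolding d_def b'_def s_def by (simp add: algebra_simps)
    have I2: "b' - b = d*t" unfolding d_def b'_def t_def by (simp add: algebra_simps)
    define m' where "m' = (m+1) div 2"
    have m': "m' < m" "m \<le> m' + m'" using False unfolding m'_def by auto
    have "(d*d*s)^m' = (d*d)^m' * s^m'"
      by (rule mult_pow) (rule Cm_comm[OF Cm_mult[OF dC dC] sC])
    also have "(d*d)^m' = d^(m'+m')" by (simp add: mult_pow power_add)
    also have "d^(m'+m') = d^m * d^(m'+m'-m)" using m' by (simp add: power_add[symmetric])
    also have "d^m = 0" using less.prems(4) d_def by simp
    finally have P: "(b'*b' - b')^m' = 0" using I1 by simp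
    have bb: "b = a + n*g" using less.prems(3) by (simp add: algebra_simps)
    have c1: "a*(n*g) = n*(a*g)" using Cm_comm[OF Cm_a nC] by (simp add: mult.assoc[symmetric])
    have "d = a*a - a + (a*(n*g) + (n*g)*a + (n*g)*(n*g) - n*g)" unfolding d_def bb by (simp add: algebra_simps)
    also have "\<dots> = n + n*(a*g) + n*(g*a) + n*(g*(n*g)) - n*g" unfolding n_def[symmetric] c1 by (simp add: mult.assoc)
    also have "\<dots> = n*(1 + a*g + g*a + g*(n*g) - g)" by (simp add: algebra_simps)
    finally have dn: "d = n*(1 + a*g + g*a + g*(n*g) - g)" .
    define h where "h = 1 + a*g + g*a + g*(n*g) - g"
    have hC: "h \<in> Cm a" unfolding h_def using less.prems nC by (intro Cm_intros)
    have "b' - a = (b' - b) + (b - a)" by simp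
    also have "\<dots> = n*(h*t + g)" using I2 dn less.prems(3) unfolding h_def by (simp add: algebra_simps)
    finally have E: "b' - a = n*(h*t + g)" .
    have "h*t + g \<in> Cm a" using hC tC less.prems by (intro Cm_intros)
    then show ?thesis using less.IH[OF m'(1) b'C _ E P] by blast
  qed
qed

lemma snc_from_nil:
  fixes a :: "'a::{ring,monoid_mult}"
  assumes N: "(a*a - a)^N = 0" shows "strongly_nil_clean_elem a"
proof -
  obtain e g where eg: "e \<in> Cm a" "e*e = e" "g \<in> Cm a" "e - a = (a*a - a)*g"
    using lift_step[where a=a and b=a and g=0 and m=N] N by (auto intro: Cm_intros)
  have nC: "a*a - a \<in> Cm a" by (intro Cm_intros)
  have "((a*a - a)*g)^N = (a*a - a)^N * g^N" by (rule mult_pow) (rule Cm_comm[OF nC eg(3)])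
  then have "((a*a - a)*g)^N = 0" using N by simp
  then have "(a - e)^N = 0" using neg_nil eg(4) by (metis minus_diff_eq)
  moreover have "e*(a - e) = (a - e)*e" using Cm_comm[OF eg(1) Cm_a] by (simp add: algebra_simps)
  ultimately show ?thesis unfolding strongly_nil_clean_elem_def idempotents_def nilpotents_def
    using eg(2) by (intro exI[of _ e] exI[of _ "a - e"]) auto
qed


lemma snc_elemE:
  assumes "strongly_nil_clean_elem (y::'a::{ring,monoid_mult})"
  obtains f q n where "f*f = f" "q^n = 0" "f*q = q*f" "y = f + q"
  using assms by (auto simp: strongly_nil_clean_elem_def idempotents_def nilpotents_def)

lemma fwd_sp:
  assumes snc: "strongly_nil_clean_ring TYPE('a::{ring,monoid_mult})"
  shows "semi_potent TYPE('a)"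
  unfolding semi_potent_def
proof (intro allI impI)
  fix I :: "'a set"
  assume H: "(left_ideal I \<or> right_ideal I) \<and> \<not> I \<subseteq> jacobson"
  show "\<exists>e\<in>I. e \<in> idempotents \<and> e \<noteq> 0"
  proof (rule ccontr)
    assume no: "\<not> (\<exists>e\<in>I. e \<in> idempotents \<and> e \<noteq> 0)"
    have key: "1 - y \<in> units_of_ring" if yI: "y \<in> I" for y
    proof -
      obtain f q n where fq: "f*f = f" "q^n = 0" "f*q = q*f" "y = f + q"
        using snc_elemE snc by (metis strongly_nil_clean_ring_def)
      show ?thesis
      proof (cases "f = 0")
        case True
        then show ?thesis using nil_unit[OF fq(2)] fq(4) by (auto simp: units_iff)
      next
        case False
        obtain v where v: "(1 - -q)*v = 1" "v*(1 - -q) = 1" "\<forall>c. c*(-q) = (-q)*c \<longrightarrow> c*v = v*c"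
          using nil_unit[OF neg_nil[OF fq(2)]] by blast
        have yq: "y*(-q) = (-q)*y" using fq by (simp add: algebra_simps)
        have yv: "y*v = v*y" using v(3) yq by blast
        have fv: "f*v = v*f" using v(3) fq(3) by simp
        have fy: "f*y = y*f" using fq by (simp add: algebra_simps)
        have fy1: "f*y = f*(1 - -q)" using fq by (simp add: algebra_simps)
        have "f*y*v = f*((1 - -q)*v)" using fy1 by (simp add: mult.assoc)
        then have f1: "f = f*y*v" using v(1) by simp
        have "f \<in> I"
        proof (cases "left_ideal I")
          case True
          have "f = (f*v)*y" using f1 yv by (simp add: mult.assoc)
          then show ?thesis using True yI by (metis left_ideal_def)
        next
          case False
          then have "right_ideal I" using H by auto
          have "f = y*(f*v)" using f1 fy by (simp add: mult.assoc)
          then show ?thesis using \<open>right_ideal I\<close> yI by (metis right_ideal_def)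
        qed
        then show ?thesis using no False fq(1) by (auto simp: idempotents_def)
      qed
    qed
    have "I \<subseteq> jacobson"
    proof
      fix x assume xI: "x \<in> I"
      show "x \<in> jacobson" unfolding J_char
      proof
        fix r
        show "1 - r*x \<in> units_of_ring"
        proof (cases "left_ideal I")
          case True then show ?thesis using key xI by (simp add: left_ideal_def)
        next
          case False
          then have "right_ideal I" using H by auto
          then have "x*r \<in> I" using xI by (simp add: right_ideal_def)
          then show ?thesis using key swap_unit by blast
        qed
      qed
    qed
    then show False using H by simp
  qed
qed

lemma fwd:
  assumes snc: "strongly_nil_clean_ring TYPE('a::{ring,monoid_mult})"
  shows "CSNC_ring TYPE('a) \<and> semi_potent TYPE('a)"
  using fwd_sp[OF snc] snc by (simp add: CSNC_ring_def strongly_nil_clean_ring_def)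

context
  fixes dummy :: "'a::{ring,monoid_mult} itself"
  assumes csnc: "CSNC_ring TYPE('a)" and sp: "semi_potent TYPE('a)"
begin

lemma UU:
  fixes u :: 'a
  assumes "u \<in> units_of_ring" shows "\<exists>n. (u - 1)^n = 0"
proof -
  have "clean u" unfolding clean_def idempotents_def using assms by (intro exI[of _ 0] exI[of _ u]) simp
  then have "strongly_nil_clean_elem u" using csnc by (simp add: CSNC_ring_def)
  then obtain e q n where fq: "e*e = e" "q^n = 0" "e*q = q*e" "u = e + q" by (rule snc_elemE)
  obtain v where uv: "u*v = 1" "v*u = 1" using assms by (auto simp: units_iff)
  have qu: "q*u = u*q" using fq by (simp add: algebra_simps)
  have qv: "q*v = v*q" using inv_comm[OF uv qu] .
  have "(v*q)^n = v^n * q^n" using mult_pow[of v q n] qv by simp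
  then have "(v*q)^n = 0" using fq(2) by simp
  then obtain w where w: "(1 - v*q)*w = 1" using nil_unit by blast
  have "u*(1 - v*q) = u - (u*v)*q" by (simp add: algebra_simps mult.assoc)
  then have e1: "e = u*(1 - v*q)" using uv fq(4) by simp
  have "e*(w*v) = u*((1 - v*q)*w)*v" using e1 by (simp add: mult.assoc)
  then have ewv: "e*(w*v) = 1" using w uv by simp
  have "e = e*(e*(w*v))" using ewv by simp
  also have "\<dots> = e*(w*v)" using fq(1) by (simp add: mult.assoc[symmetric])
  finally have "e = 1" using ewv by simp
  then have "u - 1 = q" using fq(4) by simp
  then show ?thesis using fq(2) by blast
qed

lemma NoMat:
  fixes e a b :: 'a
  assumes ee: "e*e = e" and ea: "e*a = a" and ae: "a*e = 0" and be: "b*e = b" and eb: "e*b = 0"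
    and ab: "a*b = e"
  shows "e = 0"
proof -
  define f where "f = b*a"
  have aa: "a*a = 0" by (metis ae ea mult.assoc mult_zero_left)
  have bb: "b*b = 0" by (metis be eb mult.assoc mult_zero_right)
  have ef: "e*f = 0" unfolding f_def by (metis eb mult.assoc mult_zero_left)
  have af: "a*f = a" unfolding f_def by (metis ab ea mult.assoc)
  have bf: "b*f = 0" unfolding f_def by (metis bb mult.assoc mult_zero_left)
  have fe: "f*e = 0" unfolding f_def by (metis ae mult.assoc mult_zero_right)
  have fa: "f*a = 0" unfolding f_def by (metis aa mult.assoc mult_zero_right)
  have fb: "f*b = b" unfolding f_def by (metis ab be mult.assoc)
  have ff: "f*f = f" unfolding f_def by (metis ab be mult.assoc)
  have ba: "b*a = f" unfolding f_def ..
  note tab = ee ea ae be eb ab aa bb ef af bf fe fa fb ff ba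
  define t where "t = a + b - e"
  define s where "s = a + b + f"
  define g where "g = e + f"
  have ts: "t*s = g" unfolding t_def s_def g_def by (simp add: algebra_simps tab)
  have st: "s*t = g" unfolding t_def s_def g_def by (simp add: algebra_simps tab)
  have gt: "g*t = t" unfolding t_def g_def by (simp add: algebra_simps tab)
  have tg: "t*g = t" unfolding t_def g_def by (simp add: algebra_simps tab)
  have gs: "g*s = s" unfolding s_def g_def by (simp add: algebra_simps tab)
  have sg: "s*g = s" unfolding s_def g_def by (simp add: algebra_simps tab)
  have gg: "g*g = g" unfolding g_def by (simp add: algebra_simps tab)
  have eg: "e*g = e" unfolding g_def by (simp add: algebra_simps tab)
  have tsg: "t = s - g" unfolding t_def s_def g_def by (simp add: algebra_simps)
  have u1: "(1 - g + s)*(1 - g + t) = 1" using ts st gt tg gs sg gg by (simp add: algebra_simps)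
  have u2: "(1 - g + t)*(1 - g + s) = 1" using ts st gt tg gs sg gg by (simp add: algebra_simps)
  have eq: "1 + t = 1 - g + s" using tsg by (simp add: algebra_simps)
  have u1': "(1 + t)*(1 - g + t) = 1" by (subst eq) (rule u1)
  have u2': "(1 - g + t)*(1 + t) = 1" by (subst eq) (rule u2)
  have "1 + t \<in> units_of_ring" unfolding units_iff using u1' u2' by blast
  then obtain n where "(1 + t - 1)^n = 0" using UU by blast
  then have tn: "t^n = 0" by simp
  have "g^n = t^n * s^n" using mult_pow[of t s n] ts st by simp
  then have gn: "g^n = 0" using tn by simp
  show "e = 0"
  proof (cases n)
    case 0 then show ?thesis using gn one_zero_triv by auto
  next
    case (Suc m)
    have "g^Suc m = g" by (induction m) (simp_all add: gg mult.assoc[symmetric])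
    then have "g = 0" using gn Suc by simp
    then show ?thesis using eg by simp
  qed
qed

lemma DF:
  fixes z w :: 'a
  assumes zw: "z*w = 1" shows "w*z = 1"
proof -
  define g where "g = 1 - w*z"
  have zw2: "\<And>x. z*(w*x) = x" by (simp add: mult.assoc[symmetric] zw)
  have gg: "g*g = g" unfolding g_def by (simp add: algebra_simps zw2)
  have zg: "z*g = 0" unfolding g_def by (simp add: algebra_simps zw2)
  have gw: "g*w = 0" unfolding g_def by (simp add: algebra_simps zw)
  have "g = 0"
  proof (rule NoMat[of g "g*z" "w*g"])
    show "g*g = g" by fact
    show "g*(g*z) = g*z" using gg by (simp add: mult.assoc[symmetric])
    show "g*z*g = 0" using zg by (simp add: mult.assoc)
    show "w*g*g = w*g" using gg by (simp add: mult.assoc)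
    show "g*(w*g) = 0" using gw by (simp add: mult.assoc[symmetric])
    show "g*z*(w*g) = g" using gg zw2 by (simp add: mult.assoc)
  qed
  then show ?thesis unfolding g_def by simp
qed


lemma sp_right:
  fixes c :: 'a
  assumes "c \<notin> jacobson" shows "\<exists>r. (c*r)*(c*r) = c*r \<and> c*r \<noteq> 0"
proof -
  define I where "I = range (\<lambda>r. c*r)"
  have "right_ideal I" unfolding right_ideal_def I_def
    by (auto simp: distrib_left[symmetric] mult.assoc intro: range_eqI[of _ _ 0] range_eqI[of _ _ "-_"])
  moreover have "c \<in> I" unfolding I_def by (metis mult_1_right rangeI)
  ultimately obtain e where "e \<in> I" "e*e = e" "e \<noteq> 0"
    using sp assms unfolding semi_potent_def idempotents_def by blast
  then show ?thesis unfolding I_def by auto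
qed

lemma Aprime:
  fixes x :: 'a
  assumes xx: "x*x \<in> jacobson" shows "x \<in> jacobson"
proof (rule ccontr)
  assume "x \<notin> jacobson"
  then obtain r where er: "(x*r)*(x*r) = x*r" "x*r \<noteq> 0" using sp_right by blast
  define e where "e = x*r"
  have ee: "e*e = e" using er e_def by simp
  have ee2: "\<And>X. e*(e*X) = e*X" using ee by (simp add: mult.assoc[symmetric])
  have xr2: "\<And>X. x*(r*X) = e*X" unfolding e_def by (simp add: mult.assoc)
  have "x*e = (x*x)*r" unfolding e_def by (simp add: mult.assoc)
  then have xe: "x*e \<in> jacobson" using J_rmult[OF xx] by simp
  define j where "j = e*(x*(e*(r*e)))"
  have jJ: "j \<in> jacobson" unfolding j_def using J_lmult[OF J_rmult[OF xe, of "r*e"], of e] by (simp add: mult.assoc)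
  have ej: "e*j = j" unfolding j_def by (simp add: ee2)
  have je: "j*e = j" unfolding j_def by (simp add: mult.assoc ee)
  obtain w where w: "(1 - 1*j)*w = 1" "w*(1 - 1*j) = 1" using J_unit[OF jJ, of 1] by (auto simp: units_iff)
  have "e*(1 - j) = (1 - j)*e" using ej je by (simp add: algebra_simps)
  then have ew: "e*w = w*e" using inv_comm[of "1 - j" w e] w by simp
  define a0 where "a0 = e*x - e*x*e"
  define b0 where "b0 = r*e - e*r*e"
  have a0b0: "a0*b0 = e - j" unfolding a0_def b0_def j_def by (simp add: algebra_simps ee ee2 xr2)
  have ejw: "(e - j)*w = e"
  proof -
    have "(e - j)*w = ((1 - j)*e)*w" using ej je by (simp add: algebra_simps)
    also have "\<dots> = (1 - j)*w*e" using ew by (simp add: mult.assoc)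
    also have "\<dots> = e" using w by simp
    finally show ?thesis .
  qed
  define b where "b = b0*(e*w*e)"
  have eje: "(e - j)*e = e - j" using je ee by (simp add: algebra_simps)
  have "a0*b = (a0*b0)*(e*w*e)" unfolding b_def by (simp add: mult.assoc)
  also have "\<dots> = (e - j)*e*w*e" using a0b0 by (simp add: mult.assoc)
  also have "\<dots> = (e - j)*w*e" using eje by simp
  also have "\<dots> = e" using ejw ee by simp
  finally have ab: "a0*b = e" .
  have "e = 0"
  proof (rule NoMat[of e a0 b])
    show "e*e = e" by fact
    show "e*a0 = a0" unfolding a0_def by (simp add: algebra_simps ee2)
    show "a0*e = 0" unfolding a0_def by (simp add: algebra_simps ee mult.assoc)
    show "b*e = b" unfolding b_def by (simp add: mult.assoc ee)
    show "e*b = 0" unfolding b_def b0_def by (simp add: algebra_simps ee2)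
    show "a0*b = e" by fact
  qed
  then show False using er e_def by simp
qed

lemma Bidem:
  fixes e y :: 'a
  assumes ee: "e*e = e" shows "e*y*(1 - e) \<in> jacobson"
proof -
  have ee2: "\<And>X. e*(e*X) = e*X" using ee by (simp add: mult.assoc[symmetric])
  have "(e*y*(1 - e))*(e*y*(1 - e)) = 0" by (simp add: algebra_simps ee ee2)
  then show ?thesis using Aprime J_zero by metis
qed

lemma Cpow:
  fixes x :: 'a
  shows "x^n \<in> jacobson \<Longrightarrow> x \<in> jacobson"
proof (induction n rule: less_induct)
  case (less n)
  show ?case
  proof (cases "n \<le> 1")
    case True
    then consider "n = 0" | "n = 1" by linarith
    then show ?thesis
    proof cases
      case 1 then have "(1::'a) \<in> jacobson" using less.prems by simp
      then show ?thesis using J_lmult[of 1 x] by simp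
    next
      case 2 then show ?thesis using less.prems by simp
    qed
  next
    case False
    define m where "m = (n+1) div 2"
    have m: "m < n" "n \<le> m + m" using False unfolding m_def by auto
    have "x^m * x^m = x^n * x^(m + m - n)" using m by (simp add: power_add[symmetric])
    then have "x^m * x^m \<in> jacobson" using J_rmult[OF less.prems] by simp
    then have "x^m \<in> jacobson" by (rule Aprime)
    then show ?thesis using less.IH[OF m(1)] by simp
  qed
qed

lemma Lcorner:
  fixes a c r e :: 'a
  assumes ee: "e*e = e" and cr: "c*r = e" and ac: "a - a*a = c"
  shows "e*a*e - e \<in> jacobson"
proof -
  have ee2: "\<And>X. e*(e*X) = e*X" using ee by (simp add: mult.assoc[symmetric])
  define z where "z = 1 - e + e*a*e"
  define w where "w = 1 - e + e*(1 - a)*r*e"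
  define k where "k = e*a*(1 - e)*((1 - a)*r*e)"
  have kJ: "k \<in> jacobson" unfolding k_def using J_rmult[OF Bidem[OF ee]] by blast
  have h: "e*((a - a*a)*(r*e)) = e" using ac cr ee by (simp add: mult.assoc[symmetric])
  have zw0: "z*w = 1 - k + (e*((a - a*a)*(r*e)) - e)"
    unfolding z_def w_def k_def by (simp add: algebra_simps ee ee2)
  have zw: "z*w = 1 - 1*k" using zw0 h by simp
  obtain v where v: "(1 - 1*k)*v = 1" using J_unit[OF kJ, of 1] by (auto simp: units_iff)
  have "z*(w*v) = 1" using zw v by (simp add: mult.assoc[symmetric])
  then have "(w*v)*z = 1" by (rule DF)
  then have "z \<in> units_of_ring" using \<open>z*(w*v) = 1\<close> by (auto simp: units_iff)
  then obtain n where "(z - 1)^n = 0" using UU by blast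
  then have "(e*a*e - e)^n \<in> jacobson" unfolding z_def using J_zero by (simp add: algebra_simps)
  then show ?thesis by (rule Cpow)
qed

lemma boolJ:
  fixes a :: 'a
  shows "a - a*a \<in> jacobson"
proof (rule ccontr)
  assume "a - a*a \<notin> jacobson"
  then obtain r where er: "((a - a*a)*r)*((a - a*a)*r) = (a - a*a)*r" "(a - a*a)*r \<noteq> 0"
    using sp_right by blast
  define e where "e = (a - a*a)*r"
  have ee: "e*e = e" using er e_def by simp
  have 1: "e*a*e - e \<in> jacobson" using Lcorner[OF ee, of "a - a*a" r a] e_def by simp
  have "(1 - a) - (1 - a)*(1 - a) = a - a*a" by (simp add: algebra_simps)
  then have 2: "e*(1 - a)*e - e \<in> jacobson" using Lcorner[OF ee, of "a - a*a" r "1 - a"] e_def by simp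
  have sm: "(e*a*e - e) + (e*(1 - a)*e - e) = - e" using ee by (simp add: algebra_simps)
  have "(e*a*e - e) + (e*(1 - a)*e - e) \<in> jacobson" using J_add[OF 1 2] .
  then have "- e \<in> jacobson" by (simp only: sm)
  then have "e \<in> jacobson" using J_neg by fastforce
  then have "e = 0" using idem_J ee by blast
  then show False using er e_def by simp
qed

lemma Jnil:
  fixes x :: 'a
  assumes "x \<in> jacobson" shows "\<exists>n. x^n = 0"
proof -
  have "1 - (-1)*x \<in> units_of_ring" using J_unit[OF assms] .
  then obtain n where "(1 - (-1)*x - 1)^n = 0" using UU by blast
  then show ?thesis by auto
qed

end

theorem mainTheorem5:
  shows "strongly_nil_clean_ring TYPE('a::{ring,monoid_mult}) \<longleftrightarrow>
         CSNC_ring TYPE('a) \<and> semi_potent TYPE('a)"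
proof
  assume "strongly_nil_clean_ring TYPE('a)"
  then show "CSNC_ring TYPE('a) \<and> semi_potent TYPE('a)" by (rule fwd)
next
  assume H: "CSNC_ring TYPE('a) \<and> semi_potent TYPE('a)"
  show "strongly_nil_clean_ring TYPE('a)"
    unfolding strongly_nil_clean_ring_def
  proof
    fix a :: 'a
    have "a - a*a \<in> jacobson" using boolJ[OF H[THEN conjunct1] H[THEN conjunct2]] .
    then obtain N where "(a - a*a)^N = 0" using Jnil[OF H[THEN conjunct1] H[THEN conjunct2]] by blast
    then have "(- (a - a*a))^N = 0" by (rule neg_nil)
    then have "(a*a - a)^N = 0" by simp
    then show "strongly_nil_clean_elem a" by (rule snc_from_nil)
  qed
qed

end
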